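(* Let $(Y,y)$ be a special tuple whose vector $y$ has first coordinate $y_1=0$ and satisfies $y^TKy\neq 0$ (a nonaffine special tuple). If $(Y',y')$ is a special tuple equivalent to $(Y,y)$, then $y'_1=0$ and $(y')^TKy'\neq 0$, i.e. $(Y',y')$ is also nonaffine.
   Context: Let $n\ge 0$ be an integer and let $\widetilde K$ be a real symmetric $n\times n$ matrix with $\widetilde K^2=I_n$. Let $V=\mathbb R^{n+2}$ with standard basis $e_1,\dots,e_{n+2}$, and let $K=\begin{pmatrix}0&0&1\\0&\widetilde K&0\\1&0&0\end{pmatrix}$ (block sizes $1,n,1$). For $x,w\in V$ write $x^*=x^TK$ and $L_{u,w}=u\,w^*-w\,u^*$. Let $O(V,K)=\{P:P^TKP=K\}$, $\mathfrak o(V,K)=\{X:X^TK+KX=0\}$, $O(V,K)_{e_{n+2}}=\{P\in O(V,K):Pe_{n+2}=e_{n+2}\}$. A special tuple is a pair $(Y,y)$ with $Y\in\mathfrak o(V,K)$, $y\in V$; $y_1$ denotes the first coordinate of $y$. Two special tuples $(Y,y)$ and $(Y',y')$ are equivalent if there exist $P\in O(V,K)_{e_{n+2}}$, vectors $v,p\in V$ with $p^*(e_{n+2})=0$, and $v_0\in\mathbb R$ such that $Y'+L_{v,e_{n+2}}=P(Y+L_{p,y})P^{-1}$ and $y'=Py+v_0e_{n+2}$. *)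

theory Defs
  imports "Jordan_Normal_Form.Matrix"
begin

text \<open>V = R^(n+2), realised as carrier_vec (n+2); coordinates are 0-indexed, so the
paper's e_1, ..., e_(n+2) are unit_vec (n+2) 0, ..., unit_vec (n+2) (n+1), and the paper's
y_1 is y $ 0.\<close>

definition bigK :: "nat \<Rightarrow> real mat \<Rightarrow> real mat" where
  "bigK n Kt = mat (n+2) (n+2) (\<lambda>(i,j).
     if i = 0 then (if j = n+1 then 1 else 0)
     else if i = n+1 then (if j = 0 then 1 else 0)
     else if j = 0 \<or> j = n+1 then 0
     else Kt $$ (i-1, j-1))"

definition star_app :: "real mat \<Rightarrow> real vec \<Rightarrow> real vec \<Rightarrow> real" where
  "star_app K x w = x \<bullet> (K *\<^sub>v w)"

text \<open>The row vector x^* = x^T K, as a vector: (x^T K)_j = (K^T x)_j.\<close>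
definition star_vec :: "real mat \<Rightarrow> real vec \<Rightarrow> real vec" where
  "star_vec K x = transpose_mat K *\<^sub>v x"

definition Lmat :: "real mat \<Rightarrow> real vec \<Rightarrow> real vec \<Rightarrow> real mat" where
  "Lmat K u w = mat (dim_vec u) (dim_vec u) (\<lambda>(i,j).
      u $ i * star_vec K w $ j - w $ i * star_vec K u $ j)"

definition orth_group :: "nat \<Rightarrow> real mat \<Rightarrow> real mat set" where
  "orth_group N K = {P \<in> carrier_mat N N. transpose_mat P * K * P = K}"

definition orth_alg :: "nat \<Rightarrow> real mat \<Rightarrow> real mat set" where
  "orth_alg N K = {X \<in> carrier_mat N N. transpose_mat X * K + K * X = 0\<^sub>m N N}"

definition special_tuple :: "nat \<Rightarrow> real mat \<Rightarrow> real mat \<Rightarrow> real vec \<Rightarrow> bool" where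
  "special_tuple n Kt Y y \<longleftrightarrow> Y \<in> orth_alg (n+2) (bigK n Kt) \<and> y \<in> carrier_vec (n+2)"

definition equiv_tuples ::
  "nat \<Rightarrow> real mat \<Rightarrow> real mat \<Rightarrow> real vec \<Rightarrow> real mat \<Rightarrow> real vec \<Rightarrow> bool" where
  "equiv_tuples n Kt Y y Y' y' \<longleftrightarrow>
     (let K = bigK n Kt; N = n+2; e = unit_vec N (n+1) in
      \<exists>P Pinv v p (v0::real).
        P \<in> orth_group N K \<and> P *\<^sub>v e = e \<and>
        Pinv \<in> carrier_mat N N \<and> P * Pinv = 1\<^sub>m N \<and> Pinv * P = 1\<^sub>m N \<and>
        v \<in> carrier_vec N \<and> p \<in> carrier_vec N \<and> star_app K p e = 0 \<and>
        Y' + Lmat K v e = P * (Y + Lmat K p y) * Pinv \<and>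
        y' = P *\<^sub>v y + v0 \<cdot>\<^sub>v e)"

end

theory Submission
  imports Defs
begin

lemma bigK_carrier: "bigK n Kt \<in> carrier_mat (n+2) (n+2)"
  unfolding bigK_def by simp

lemma bigK_row: "row (bigK n Kt) (n+1) = unit_vec (n+2) 0"
  by (rule eq_vecI, auto simp: bigK_def unit_vec_def)

lemma bigK_e: "bigK n Kt *\<^sub>v unit_vec (n+2) (n+1) = unit_vec (n+2) 0"
proof (rule eq_vecI)
  fix i assume "i < dim_vec (unit_vec (n+2) 0)"
  then have i: "i < n+2" by simp
  have "(bigK n Kt *\<^sub>v unit_vec (n+2) (n+1)) $ i = row (bigK n Kt) i \<bullet> unit_vec (n+2) (n+1)"
    using i by (simp add: bigK_def)
  also have "\<dots> = row (bigK n Kt) i $ (n+1)" by (rule scalar_prod_right_unit, simp)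
  also have "\<dots> = unit_vec (n+2) 0 $ i" using i by (auto simp: bigK_def unit_vec_def)
  finally show "(bigK n Kt *\<^sub>v unit_vec (n+2) (n+1)) $ i = unit_vec (n+2) 0 $ i" .
qed (simp add: bigK_def)

lemma B_e_left: assumes "x \<in> carrier_vec (n+2)"
  shows "unit_vec (n+2) (n+1) \<bullet> (bigK n Kt *\<^sub>v x) = x $ 0"
proof -
  have "unit_vec (n+2) (n+1) \<bullet> (bigK n Kt *\<^sub>v x) = (bigK n Kt *\<^sub>v x) $ (n+1)"
    by (rule scalar_prod_left_unit, insert bigK_carrier[of n Kt] assms, auto)
  also have "\<dots> = row (bigK n Kt) (n+1) \<bullet> x" by (simp add: bigK_def)
  also have "\<dots> = x $ 0" unfolding bigK_row using assms by simp
  finally show ?thesis .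
qed

lemma B_e_right: "x \<bullet> (bigK n Kt *\<^sub>v unit_vec (n+2) (n+1)) = x $ 0"
  unfolding bigK_e by simp

lemma B_inv:
  fixes P K :: "real mat"
  assumes P: "P \<in> carrier_mat N N" and K: "K \<in> carrier_mat N N"
    and PK: "transpose_mat P * K * P = K"
    and x: "x \<in> carrier_vec N" and z: "z \<in> carrier_vec N"
  shows "(P *\<^sub>v x) \<bullet> (K *\<^sub>v (P *\<^sub>v z)) = x \<bullet> (K *\<^sub>v z)"
proof -
  have "(P *\<^sub>v x) \<bullet> (K *\<^sub>v (P *\<^sub>v z)) = (transpose_mat P *\<^sub>v (K *\<^sub>v (P *\<^sub>v z))) \<bullet> x"
  proof -
    have c: "K *\<^sub>v (P *\<^sub>v z) \<in> carrier_vec N" using P K z by simp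
    have "(transpose_mat P *\<^sub>v (K *\<^sub>v (P *\<^sub>v z))) \<bullet> x = (K *\<^sub>v (P *\<^sub>v z)) \<bullet> (P *\<^sub>v x)"
      by (rule transpose_vec_mult_scalar[OF P x c])
    also have "\<dots> = (P *\<^sub>v x) \<bullet> (K *\<^sub>v (P *\<^sub>v z))"
      by (rule comm_scalar_prod[OF c], insert P x, simp)
    finally show ?thesis by simp
  qed
  also have "transpose_mat P *\<^sub>v (K *\<^sub>v (P *\<^sub>v z)) = (transpose_mat P * K * P) *\<^sub>v z"
    using P K z by (simp add: assoc_mult_mat_vec[of _ N N _ N])
  also have "\<dots> = K *\<^sub>v z" using PK by simp
  also have "(K *\<^sub>v z) \<bullet> x = x \<bullet> (K *\<^sub>v z)" using K x z by (intro comm_scalar_prod) auto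
  finally show ?thesis .
qed

theorem lemma8:
  fixes n :: nat and Kt Y Y' :: "real mat" and y y' :: "real vec"
  assumes "Kt \<in> carrier_mat n n"
    and "transpose_mat Kt = Kt"
    and "Kt * Kt = 1\<^sub>m n"
    and "special_tuple n Kt Y y"
    and "y $ 0 = 0"
    and "y \<bullet> (bigK n Kt *\<^sub>v y) \<noteq> 0"
    and "special_tuple n Kt Y' y'"
    and "equiv_tuples n Kt Y y Y' y'"
  shows "y' $ 0 = 0 \<and> y' \<bullet> (bigK n Kt *\<^sub>v y') \<noteq> 0"
proof -
  define K where "K = bigK n Kt"
  define e :: "real vec" where "e = unit_vec (n+2) (n+1)"
  have y: "y \<in> carrier_vec (n+2)" using assms(4) by (simp add: special_tuple_def)
  have ex: "\<exists>P Pinv v p (v0::real).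
        P \<in> orth_group (n+2) K \<and> P *\<^sub>v e = e \<and>
        Pinv \<in> carrier_mat (n+2) (n+2) \<and> P * Pinv = 1\<^sub>m (n+2) \<and> Pinv * P = 1\<^sub>m (n+2) \<and>
        v \<in> carrier_vec (n+2) \<and> p \<in> carrier_vec (n+2) \<and> star_app K p e = 0 \<and>
        Y' + Lmat K v e = P * (Y + Lmat K p y) * Pinv \<and>
        y' = P *\<^sub>v y + v0 \<cdot>\<^sub>v e"
    using assms(8) unfolding equiv_tuples_def Let_def K_def e_def .
  then obtain P :: "real mat" and Pinv v p and v0 :: real where P: "P \<in> orth_group (n+2) K"
    and Pe: "P *\<^sub>v e = e" and rest1: "Pinv \<in> carrier_mat (n+2) (n+2) \<and> P * Pinv = 1\<^sub>m (n+2) \<and> Pinv * P = 1\<^sub>m (n+2) \<and>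
        v \<in> carrier_vec (n+2) \<and> p \<in> carrier_vec (n+2) \<and> star_app K p e = 0 \<and>
        Y' + Lmat K v e = P * (Y + Lmat K p y) * Pinv"
    and y': "y' = P *\<^sub>v y + v0 \<cdot>\<^sub>v e"
    by (elim exE conjE) (rule that, assumption, assumption, (intro conjI; assumption), assumption)
  have Pc: "P \<in> carrier_mat (n+2) (n+2)" and PK: "transpose_mat P * K * P = K"
    using P by (auto simp: orth_group_def)
  have Kc: "K \<in> carrier_mat (n+2) (n+2)" unfolding K_def by (rule bigK_carrier)
  have ec: "e \<in> carrier_vec (n+2)" unfolding e_def by simp
  have Pyc: "P *\<^sub>v y \<in> carrier_vec (n+2)" using Pc y by simp
  have Bel: "\<And>x. x \<in> carrier_vec (n+2) \<Longrightarrow> e \<bullet> (K *\<^sub>v x) = x $ 0"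
    unfolding K_def e_def by (rule B_e_left)
  have Ber: "\<And>x. x \<bullet> (K *\<^sub>v e) = x $ 0"
    unfolding K_def e_def by (rule B_e_right)
  have ee: "e $ 0 = 0" unfolding e_def by simp
  have Py0: "(P *\<^sub>v y) $ 0 = 0"
  proof -
    have "(P *\<^sub>v y) $ 0 = (P *\<^sub>v e) \<bullet> (K *\<^sub>v (P *\<^sub>v y))" using Bel[OF Pyc] Pe by simp
    also have "\<dots> = e \<bullet> (K *\<^sub>v y)" by (rule B_inv[OF Pc Kc PK ec y])
    also have "\<dots> = 0" using Bel[OF y] assms(5) by simp
    finally show ?thesis .
  qed
  have Q: "(P *\<^sub>v y) \<bullet> (K *\<^sub>v (P *\<^sub>v y)) = y \<bullet> (K *\<^sub>v y)" by (rule B_inv[OF Pc Kc PK y y])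
  have y'0: "y' $ 0 = 0" using y' Py0 ee Pyc ec by simp
  have Ky: "K *\<^sub>v y' = K *\<^sub>v (P *\<^sub>v y) + v0 \<cdot>\<^sub>v (K *\<^sub>v e)"
    unfolding y' using Kc Pyc ec by (simp add: mult_add_distrib_mat_vec[OF Kc Pyc] mult_mat_vec[OF Kc ec])
  have "y' \<bullet> (K *\<^sub>v y') = (P *\<^sub>v y) \<bullet> (K *\<^sub>v (P *\<^sub>v y)) + v0 * ((P *\<^sub>v y) \<bullet> (K *\<^sub>v e))
        + v0 * (e \<bullet> (K *\<^sub>v (P *\<^sub>v y))) + v0 * v0 * (e \<bullet> (K *\<^sub>v e))"
  proof -
    have c1: "K *\<^sub>v (P *\<^sub>v y) \<in> carrier_vec (n+2)" using Kc Pyc by simp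
    have c2: "K *\<^sub>v e \<in> carrier_vec (n+2)" using Kc ec by simp
    have c3: "v0 \<cdot>\<^sub>v e \<in> carrier_vec (n+2)" using ec by simp
    have c4: "v0 \<cdot>\<^sub>v (K *\<^sub>v e) \<in> carrier_vec (n+2)" using c2 by simp
    have "y' \<bullet> (K *\<^sub>v y') = (P *\<^sub>v y + v0 \<cdot>\<^sub>v e) \<bullet> (K *\<^sub>v (P *\<^sub>v y) + v0 \<cdot>\<^sub>v (K *\<^sub>v e))"
      using Ky y' by simp
    also have "\<dots> = (P *\<^sub>v y) \<bullet> (K *\<^sub>v (P *\<^sub>v y) + v0 \<cdot>\<^sub>v (K *\<^sub>v e))
       + (v0 \<cdot>\<^sub>v e) \<bullet> (K *\<^sub>v (P *\<^sub>v y) + v0 \<cdot>\<^sub>v (K *\<^sub>v e))"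
      by (rule add_scalar_prod_distrib[OF Pyc c3], insert c1 c4, simp)
    also have "(P *\<^sub>v y) \<bullet> (K *\<^sub>v (P *\<^sub>v y) + v0 \<cdot>\<^sub>v (K *\<^sub>v e))
       = (P *\<^sub>v y) \<bullet> (K *\<^sub>v (P *\<^sub>v y)) + (P *\<^sub>v y) \<bullet> (v0 \<cdot>\<^sub>v (K *\<^sub>v e))"
      by (rule scalar_prod_add_distrib[OF Pyc c1 c4])
    also have "(v0 \<cdot>\<^sub>v e) \<bullet> (K *\<^sub>v (P *\<^sub>v y) + v0 \<cdot>\<^sub>v (K *\<^sub>v e))
       = (v0 \<cdot>\<^sub>v e) \<bullet> (K *\<^sub>v (P *\<^sub>v y)) + (v0 \<cdot>\<^sub>v e) \<bullet> (v0 \<cdot>\<^sub>v (K *\<^sub>v e))"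
      by (rule scalar_prod_add_distrib[OF c3 c1 c4])
    also have "(P *\<^sub>v y) \<bullet> (v0 \<cdot>\<^sub>v (K *\<^sub>v e)) = v0 * ((P *\<^sub>v y) \<bullet> (K *\<^sub>v e))"
      by (rule scalar_prod_smult_distrib[OF Pyc c2])
    also have "(v0 \<cdot>\<^sub>v e) \<bullet> (K *\<^sub>v (P *\<^sub>v y)) = v0 * (e \<bullet> (K *\<^sub>v (P *\<^sub>v y)))"
      by (rule smult_scalar_prod_distrib[OF ec c1])
    also have "(v0 \<cdot>\<^sub>v e) \<bullet> (v0 \<cdot>\<^sub>v (K *\<^sub>v e)) = v0 * v0 * (e \<bullet> (K *\<^sub>v e))"
      using smult_scalar_prod_distrib[OF ec c4] scalar_prod_smult_distrib[OF ec c2] by simp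
    finally show ?thesis by simp
  qed
  also have "\<dots> = y \<bullet> (K *\<^sub>v y)" using Q Ber Bel[OF Pyc] Py0 ee by simp
  finally show ?thesis using y'0 assms(6) unfolding K_def by simp
qed

end
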